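(* Let $\Omega=[0,1]$ (Lebesgue measure) or $\mathbb{N}$ (counting measure), $\mathbb{K}=\mathbb{R}$ or $\mathbb{C}$, and let $\Phi,\Psi$ be N-functions with $\Phi,\Psi\in\Delta_2^\Omega$, $\Phi\in\mathcal{K}(p_\Phi,q_\Phi)$ and $\Psi\in\mathcal{K}(p_\Psi,q_\Psi)$ for some $0<p_\Phi\le q_\Phi<\infty$, $0<p_\Psi\le q_\Psi<\infty$. Set $\alpha=p_\Phi/q_\Psi$ and $\beta=q_\Phi/p_\Psi$. Then for every $f\in L^\Phi(\Omega,\mathbb{K})$, $$\min\{\|f\|_{(\Phi)}^\alpha,\|f\|_{(\Phi)}^\beta\}\le\|\phi_{\Phi\Psi}(f)\|_{(\Psi)}\le\max\{\|f\|_{(\Phi)}^\alpha,\|f\|_{(\Phi)}^\beta\}.$$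
   Context: N-function: convex $\Phi:[0,\infty)\to[0,\infty)$, $\Phi(0)=0$, $0<\Phi(t)<\infty$ for $t>0$, $\Phi(t)/t\to0$ as $t\to0$ and $\to\infty$ as $t\to\infty$. $\Phi\in\Delta_2^\Omega$: there are $K,t_0>0$ with $\Phi(2t)\le K\Phi(t)$ for $t\ge t_0$ if $\Omega=[0,1]$ (for $0<t\le t_0$ if $\Omega=\mathbb{N}$). For $0<a\le b<\infty$, a non-decreasing continuous $\varphi:[0,\infty)\to[0,\infty)$ with $\varphi(0)=0$ is in $\mathcal{K}(a,b)$ if $\varphi(t)/t^a$ is non-decreasing and $\varphi(t)/t^b$ is non-increasing on $t>0$. $L^\Phi(\Omega,\mathbb{K})$ with gauge norm $\|f\|_{(\Phi)}=\inf\{b>0:\int_\Omega\Phi(|f|/b)d\mu\le1\}$. Generalized Mazur map: $\phi_{\Phi\Psi}(f)=\Psi^{-1}(\Phi(|f|))\,\mathrm{sign}(f)$, with $\mathrm{sign}(f)(x)=f(x)/|f(x)|$ where $f(x)\neq0$. *)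

theory Defs
  imports "HOL-Analysis.Analysis"
begin

definition N_function :: "(real \<Rightarrow> real) \<Rightarrow> bool" where
  "N_function \<Phi> \<longleftrightarrow>
     convex_on {0..} \<Phi> \<and> \<Phi> 0 = 0 \<and> (\<forall>t>0. 0 < \<Phi> t) \<and>
     ((\<lambda>t. \<Phi> t / t) \<longlongrightarrow> 0) (at_right 0) \<and>
     filterlim (\<lambda>t. \<Phi> t / t) at_top at_top"

definition delta2_infty :: "(real \<Rightarrow> real) \<Rightarrow> bool" where
  "delta2_infty \<Phi> \<longleftrightarrow> (\<exists>K t0. K > 0 \<and> t0 > 0 \<and> (\<forall>t\<ge>t0. \<Phi> (2*t) \<le> K * \<Phi> t))"

definition delta2_zero :: "(real \<Rightarrow> real) \<Rightarrow> bool" where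
  "delta2_zero \<Phi> \<longleftrightarrow> (\<exists>K t0. K > 0 \<and> t0 > 0 \<and> (\<forall>t. 0 < t \<and> t \<le> t0 \<longrightarrow> \<Phi> (2*t) \<le> K * \<Phi> t))"

definition class_K :: "real \<Rightarrow> real \<Rightarrow> (real \<Rightarrow> real) \<Rightarrow> bool" where
  "class_K a b \<phi> \<longleftrightarrow>
     mono_on {0..} \<phi> \<and> continuous_on {0..} \<phi> \<and> \<phi> 0 = 0 \<and> (\<forall>t\<ge>0. 0 \<le> \<phi> t) \<and>
     mono_on {0<..} (\<lambda>t. \<phi> t / t powr a) \<and>
     antimono_on {0<..} (\<lambda>t. \<phi> t / t powr b)"

definition orlicz_modular :: "'a measure \<Rightarrow> (real \<Rightarrow> real) \<Rightarrow> ('a \<Rightarrow> 'k::real_normed_vector) \<Rightarrow> ennreal" where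
  "orlicz_modular M \<Phi> f = (\<integral>\<^sup>+ x. ennreal (\<Phi> (norm (f x))) \<partial>M)"

definition orlicz_space :: "'a measure \<Rightarrow> (real \<Rightarrow> real) \<Rightarrow> ('a \<Rightarrow> 'k::real_normed_vector) set" where
  "orlicz_space M \<Phi> = {f \<in> borel_measurable M.
      \<exists>c>0. orlicz_modular M \<Phi> (\<lambda>x. inverse c *\<^sub>R f x) < \<infinity>}"

definition gauge_norm :: "'a measure \<Rightarrow> (real \<Rightarrow> real) \<Rightarrow> ('a \<Rightarrow> 'k::real_normed_vector) \<Rightarrow> real" where
  "gauge_norm M \<Phi> f = Inf {b. b > 0 \<and> orlicz_modular M \<Phi> (\<lambda>x. inverse b *\<^sub>R f x) \<le> 1}"

definition Ninv :: "(real \<Rightarrow> real) \<Rightarrow> real \<Rightarrow> real" where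
  "Ninv \<Psi> = the_inv_into {0..} \<Psi>"

text \<open>Generalized Mazur map: Psi^{-1}(Phi(|f|)) sign(f), sign(f) = f/|f| (= sgn, 0 where f = 0).\<close>
definition mazur_map :: "(real \<Rightarrow> real) \<Rightarrow> (real \<Rightarrow> real) \<Rightarrow> ('a \<Rightarrow> 'k::real_normed_vector) \<Rightarrow> 'a \<Rightarrow> 'k" where
  "mazur_map \<Phi> \<Psi> f = (\<lambda>x. Ninv \<Psi> (\<Phi> (norm (f x))) *\<^sub>R sgn (f x))"

end

theory Submission
  imports Defs
begin


lemma K_ge1:
  assumes K: "class_K p q \<phi>" and t: "t \<ge> 0" and l: "l \<ge> 1"
  shows "l powr p * \<phi> t \<le> \<phi> (l*t) \<and> \<phi> (l*t) \<le> l powr q * \<phi> t"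
proof (cases "t = 0")
  case True then show ?thesis using K by (simp add: class_K_def)
next
  case False
  hence tp: "t > 0" using t by simp
  have lt: "l*t > 0" using tp l by simp
  have le: "t \<le> l*t" using tp l by simp
  have m1: "mono_on {0<..} (\<lambda>t. \<phi> t / t powr p)" and m2: "antimono_on {0<..} (\<lambda>t. \<phi> t / t powr q)"
    using K by (auto simp: class_K_def)
  have a: "\<phi> t / t powr p \<le> \<phi> (l*t) / (l*t) powr p"
    using mono_onD[OF m1, of t "l*t"] tp lt le by simp
  have b: "\<phi> (l*t) / (l*t) powr q \<le> \<phi> t / t powr q"
    using monotone_onD[OF m2, of t "l*t"] tp lt le by simp
  have lp: "l powr p > 0" "l powr q > 0" "t powr p > 0" "t powr q > 0" using tp l by auto
  have "(l*t) powr p = l powr p * t powr p" "(l*t) powr q = l powr q * t powr q"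
    using tp l by (auto simp: powr_mult)
  with a b lp show ?thesis by (auto simp: field_simps)
qed

lemma K_le1:
  assumes K: "class_K p q \<phi>" and t: "t \<ge> 0" and l: "l > 0" "l \<le> 1"
  shows "l powr q * \<phi> t \<le> \<phi> (l*t) \<and> \<phi> (l*t) \<le> l powr p * \<phi> t"
proof -
  have L: "1/l \<ge> 1" using l by simp
  have "(1/l) powr p * \<phi> (l*t) \<le> \<phi> ((1/l)*(l*t)) \<and> \<phi> ((1/l)*(l*t)) \<le> (1/l) powr q * \<phi> (l*t)"
    using K_ge1[OF K _ L, of "l*t"] t l by simp
  moreover have "(1/l)*(l*t) = t" using l by simp
  moreover have "(1/l) powr p = 1 / l powr p" "(1/l) powr q = 1 / l powr q" using l by (auto simp: powr_divide)
  moreover have "l powr p > 0" "l powr q > 0" using l by auto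
  ultimately show ?thesis by (auto simp: field_simps)
qed



lemma Ninv_props:
  assumes K: "class_K p q \<Psi>" and p: "p > 0" and pos: "\<forall>t>0. 0 < \<Psi> t" and u: "u \<ge> 0"
  shows "Ninv \<Psi> u \<ge> 0 \<and> \<Psi> (Ninv \<Psi> u) = u"
proof -
  have z: "\<Psi> 0 = 0" and c: "continuous_on {0..} \<Psi>" using K by (auto simp: class_K_def)
  have sm: "\<Psi> s < \<Psi> t" if "0 \<le> s" "s < t" for s t
  proof (cases "s = 0")
    case True then show ?thesis using z pos that by auto
  next
    case False
    hence sp: "s > 0" using that by simp
    define l where "l = t / s"
    have l1: "l > 1" using that sp by (simp add: l_def)
    have "l powr p * \<Psi> s \<le> \<Psi> (l * s)" using K_ge1[OF K, of s l] l1 sp by simp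
    moreover have "l * s = t" using sp by (simp add: l_def)
    moreover have "l powr p > 1" using powr_less_mono[of 0 p l] l1 p by simp
    moreover have "\<Psi> s > 0" using pos sp by simp
    ultimately have "l powr p * \<Psi> s \<le> \<Psi> t" "1 < l powr p" "0 < \<Psi> s" by auto
    then show ?thesis using mult_strict_right_mono[of 1 "l powr p" "\<Psi> s"] by linarith
  qed
  have inj: "inj_on \<Psi> {0..}"
  proof (rule inj_onI)
    fix x y assume "x \<in> {0..}" "y \<in> {0..}" "\<Psi> x = \<Psi> y"
    then show "x = y" using sm[of x y] sm[of y x] by (cases x y rule: linorder_cases) auto
  qed
  have P1: "\<Psi> 1 > 0" using pos by simp
  define l where "l = (u / \<Psi> 1 + 1) powr (1/p)"
  have lpos: "u / \<Psi> 1 + 1 \<ge> 1" using u P1 by simp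
  have l1: "l \<ge> 1" unfolding l_def using lpos p by (simp add: ge_one_powr_ge_zero)
  have lp: "l powr p = u / \<Psi> 1 + 1" unfolding l_def using lpos p by (simp add: powr_powr)
  have "l powr p * \<Psi> 1 \<le> \<Psi> (l*1)" using K_ge1[OF K, of 1 l] l1 by simp
  moreover have "l powr p * \<Psi> 1 = u + \<Psi> 1" using lp P1 by (simp add: field_simps)
  ultimately have "u \<le> \<Psi> l" using P1 by simp
  then obtain x where x: "0 \<le> x" "x \<le> l" "\<Psi> x = u"
    using IVT'[of \<Psi> 0 u l] z u l1 continuous_on_subset[OF c] by fastforce
  have "Ninv \<Psi> u = x" unfolding Ninv_def using the_inv_into_f_f[OF inj, of x] x by simp
  then show ?thesis using x by simp
qed



lemma ar_up: "(X::real) \<le> Y / B \<Longrightarrow> Y \<le> C * Z \<Longrightarrow> C \<le> B \<Longrightarrow> B > 0 \<Longrightarrow> Z \<ge> 0 \<Longrightarrow> X \<le> Z"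
proof -
  assume a: "X \<le> Y / B" "Y \<le> C * Z" "C \<le> B" "B > 0" "Z \<ge> 0"
  have "Y / B \<le> C * Z / B" using a by (simp add: divide_right_mono)
  also have "C * Z / B \<le> Z"
  proof -
    have "C * Z \<le> B * Z" using a by (simp add: mult_right_mono)
    then show ?thesis using a by (simp add: divide_le_eq mult.commute)
  qed
  finally show ?thesis using a(1) by linarith
qed

lemma ar_lo: "(X::real) \<ge> Y / B \<Longrightarrow> Y \<ge> C * Z \<Longrightarrow> B \<le> C \<Longrightarrow> B > 0 \<Longrightarrow> Z \<ge> 0 \<Longrightarrow> X \<ge> Z"
proof -
  assume a: "X \<ge> Y / B" "Y \<ge> C * Z" "B \<le> C" "B > 0" "Z \<ge> 0"
  have "Y / B \<ge> C * Z / B" using a by (simp add: divide_right_mono)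
  moreover have "C * Z / B \<ge> Z"
  proof -
    have "C * Z \<ge> B * Z" using a by (simp add: mult_right_mono)
    then show ?thesis using a by (simp add: le_divide_eq mult.commute)
  qed
  ultimately show ?thesis using a(1) by linarith
qed

lemma Psi_div_up:
  assumes K: "class_K p q \<Psi>" and s: "s \<ge> 0" and b: "b > 0"
  shows "\<Psi> (s / b) \<le> \<Psi> s / b powr (if b \<ge> 1 then p else q)"
proof (cases "b \<ge> 1")
  case True
  have "\<Psi> ((1/b) * s) \<le> (1/b) powr p * \<Psi> s" using K_le1[OF K s, of "1/b"] True by simp
  then show ?thesis using True b by (simp add: powr_divide)
next
  case False
  have "\<Psi> ((1/b) * s) \<le> (1/b) powr q * \<Psi> s" using K_ge1[OF K s, of "1/b"] False b by simp
  then show ?thesis using False b by (simp add: powr_divide)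
qed

lemma Psi_div_lo:
  assumes K: "class_K p q \<Psi>" and s: "s \<ge> 0" and b: "b > 0"
  shows "\<Psi> (s / b) \<ge> \<Psi> s / b powr (if b \<le> 1 then p else q)"
proof (cases "b \<le> 1")
  case True
  have "(1/b) powr p * \<Psi> s \<le> \<Psi> ((1/b) * s)" using K_ge1[OF K s, of "1/b"] True b by simp
  then show ?thesis using True b by (simp add: powr_divide)
next
  case False
  have "(1/b) powr q * \<Psi> s \<le> \<Psi> ((1/b) * s)" using K_le1[OF K s, of "1/b"] False b by simp
  then show ?thesis using False b by (simp add: powr_divide)
qed

lemma Phi_mul:
  assumes K: "class_K p q \<Phi>" and t: "t \<ge> 0" and c: "c > 0"
  shows "\<Phi> t \<le> c powr (if c \<ge> 1 then q else p) * \<Phi> (t / c)"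
    and "\<Phi> t \<ge> c powr (if c \<ge> 1 then p else q) * \<Phi> (t / c)"
proof -
  have tc: "t / c \<ge> 0" using t c by simp
  have e: "c * (t / c) = t" using c by simp
  show "\<Phi> t \<le> c powr (if c \<ge> 1 then q else p) * \<Phi> (t / c)"
    using K_ge1[OF K tc, of c] K_le1[OF K tc, of c] c e by (cases "c \<ge> 1") auto
  show "\<Phi> t \<ge> c powr (if c \<ge> 1 then p else q) * \<Phi> (t / c)"
    using K_ge1[OF K tc, of c] K_le1[OF K tc, of c] c e by (cases "c \<ge> 1") auto
qed



lemma pt_up:
  assumes KF: "class_K pF qF \<Phi>" and KP: "class_K pP qP \<Psi>"
    and pr: "0 < pF" "pF \<le> qF" "0 < pP" "pP \<le> qP"
    and ab: "\<alpha> = pF / qP" "\<beta> = qF / pP"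
    and t: "t \<ge> 0" and s: "s \<ge> 0" and st: "\<Psi> s = \<Phi> t" and c: "c > 0"
    and b: "b = max (c powr \<alpha>) (c powr \<beta>)"
  shows "\<Psi> (s / b) \<le> \<Phi> (t / c)"
proof -
  have alb: "\<alpha> \<le> \<beta>" "\<alpha> > 0" using pr ab by (auto simp: frac_le)
  have "c powr \<alpha> > 0" using c by simp
  hence bp: "b > 0" using b by linarith
  have Z: "\<Phi> (t / c) \<ge> 0" using KF t c by (simp add: class_K_def)
  show ?thesis
  proof (cases "c \<ge> 1")
    case True
    have "c powr \<alpha> \<le> c powr \<beta>" using powr_mono[OF alb(1) True] .
    hence bb: "b = c powr \<beta>" using b by simp
    have b1: "b \<ge> 1" using bb True alb pr ab by (simp add: ge_one_powr_ge_zero)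
    have X: "\<Psi> (s / b) \<le> \<Psi> s / b powr pP" using Psi_div_up[OF KP s bp] b1 by simp
    have Y: "\<Phi> t \<le> c powr qF * \<Phi> (t / c)" using Phi_mul(1)[OF KF t c] True by simp
    have E: "c powr qF \<le> b powr pP" using bb pr ab by (simp add: powr_powr)
    have X': "\<Psi> (s / b) \<le> \<Phi> t / b powr pP" using X st by simp
    have P: "b powr pP > 0" using bp by simp
    from ar_up[OF X' Y E P Z] show ?thesis .
  next
    case False
    have "c powr \<beta> \<le> c powr \<alpha>" using powr_mono'[OF alb(1), of c] False c by simp
    hence bb: "b = c powr \<alpha>" using b by simp
    have b1: "b < 1" using bb False alb c powr_less_mono2[of \<alpha> c 1] by simp
    have X: "\<Psi> (s / b) \<le> \<Psi> s / b powr qP" using Psi_div_up[OF KP s bp] b1 by simp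
    have Y: "\<Phi> t \<le> c powr pF * \<Phi> (t / c)" using Phi_mul(1)[OF KF t c] False by simp
    have E: "c powr pF \<le> b powr qP" using bb pr ab by (simp add: powr_powr)
    have X': "\<Psi> (s / b) \<le> \<Phi> t / b powr qP" using X st by simp
    have P: "b powr qP > 0" using bp by simp
    from ar_up[OF X' Y E P Z] show ?thesis .
  qed
qed

lemma pt_lo:
  assumes KF: "class_K pF qF \<Phi>" and KP: "class_K pP qP \<Psi>"
    and pr: "0 < pF" "pF \<le> qF" "0 < pP" "pP \<le> qP"
    and ab: "\<alpha> = pF / qP" "\<beta> = qF / pP"
    and t: "t \<ge> 0" and s: "s \<ge> 0" and st: "\<Psi> s = \<Phi> t" and c: "c > 0"
    and bp: "b > 0" and b: "b \<le> min (c powr \<alpha>) (c powr \<beta>)"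
  shows "\<Phi> (t / c) \<le> \<Psi> (s / b)"
proof -
  have alb: "\<alpha> \<le> \<beta>" "\<alpha> > 0" using pr ab by (auto simp: frac_le)
  have Z: "\<Phi> (t / c) \<ge> 0" using KF t c by (simp add: class_K_def)
  show ?thesis
  proof (cases "c \<ge> 1")
    case True
    have "c powr \<alpha> \<le> c powr \<beta>" using powr_mono[OF alb(1) True] .
    hence bb: "b \<le> c powr \<alpha>" using b by simp
    have Y: "\<Phi> t \<ge> c powr pF * \<Phi> (t / c)" using Phi_mul(2)[OF KF t c] True by simp
    have X: "\<Psi> (s / b) \<ge> \<Psi> s / b powr (if b \<le> 1 then pP else qP)" using Psi_div_lo[OF KP s bp] by simp
    have "b powr (if b \<le> 1 then pP else qP) \<le> c powr pF"
    proof (cases "b \<le> 1")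
      case True
      have "b powr pP \<le> 1" using True bp pr by (simp add: powr_le1)
      moreover have "1 \<le> c powr pF" using \<open>c \<ge> 1\<close> pr by (simp add: ge_one_powr_ge_zero)
      ultimately show ?thesis using True by simp
    next
      case False
      have "b powr qP \<le> (c powr \<alpha>) powr qP" using powr_mono2[OF _ _ bb] pr bp by simp
      also have "\<dots> = c powr pF" using pr ab by (simp add: powr_powr)
      finally show ?thesis using False by simp
    qed
    note E = this
    have X': "\<Psi> (s / b) \<ge> \<Phi> t / b powr (if b \<le> 1 then pP else qP)" using X st by simp
    have P: "b powr (if b \<le> 1 then pP else qP) > 0" using bp by simp
    from ar_lo[OF X' Y E P Z] show ?thesis .
  next
    case False
    have "c powr \<beta> \<le> c powr \<alpha>" using powr_mono'[OF alb(1), of c] False c by simp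
    hence bb: "b \<le> c powr \<beta>" using b by simp
    have "c powr \<beta> < 1" using False alb c powr_less_mono2[of \<beta> c 1] by simp
    hence b1: "b \<le> 1" using bb by simp
    have Y: "\<Phi> t \<ge> c powr qF * \<Phi> (t / c)" using Phi_mul(2)[OF KF t c] False by simp
    have X: "\<Psi> (s / b) \<ge> \<Psi> s / b powr pP" using Psi_div_lo[OF KP s bp] b1 by simp
    have "b powr pP \<le> (c powr \<beta>) powr pP" using powr_mono2[OF _ _ bb] pr bp by simp
    also have "\<dots> = c powr qF" using pr ab by (simp add: powr_powr)
    finally have E: "b powr pP \<le> c powr qF" .
    have X': "\<Psi> (s / b) \<ge> \<Phi> t / b powr pP" using X st by simp
    have P: "b powr pP > 0" using bp by simp
    from ar_lo[OF X' Y E P Z] show ?thesis .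
  qed
qed



lemma modular_scale:
  fixes f :: "'a \<Rightarrow> 'k::real_normed_vector"
  assumes "b > 0"
  shows "orlicz_modular M \<Phi> (\<lambda>x. inverse b *\<^sub>R f x) = (\<integral>\<^sup>+x. ennreal (\<Phi> (norm (f x) / b)) \<partial>M)"
  unfolding orlicz_modular_def using assms by (simp add: divide_inverse mult.commute)

lemma S_nonempty:
  fixes f :: "'a \<Rightarrow> 'k::real_normed_vector"
  assumes K: "class_K p q \<Phi>" and p: "p > 0" and fin: "f \<in> orlicz_space M \<Phi>"
  shows "\<exists>b>0. (\<integral>\<^sup>+x. ennreal (\<Phi> (norm (f x) / b)) \<partial>M) \<le> 1"
proof -
  from fin obtain c where c: "c > 0" and fm: "f \<in> borel_measurable M"
    and I: "orlicz_modular M \<Phi> (\<lambda>x. inverse c *\<^sub>R f x) < \<infinity>"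
    unfolding orlicz_space_def by auto
  define F where "F = (\<lambda>x. ennreal (\<Phi> (norm (f x) / c)))"
  have I': "integral\<^sup>N M F < \<infinity>" using I modular_scale[OF c, of M \<Phi> f] by (simp add: F_def)
  define \<Phi>' where "\<Phi>' = (\<lambda>t. \<Phi> (max 0 t))"
  have cP: "continuous_on {0..} \<Phi>" using K by (simp add: class_K_def)
  have "continuous_on UNIV \<Phi>'" unfolding \<Phi>'_def
    by (rule continuous_on_compose2[OF cP]) (auto intro!: continuous_intros)
  hence [measurable]: "\<Phi>' \<in> borel_measurable borel" by (rule borel_measurable_continuous_onI)
  have "(\<lambda>x. ennreal (\<Phi>' (norm (f x) / c))) \<in> borel_measurable M" using fm by measurable
  moreover have "(\<lambda>x. ennreal (\<Phi>' (norm (f x) / c))) = F"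
    unfolding F_def \<Phi>'_def using c by (auto intro!: ext simp: max_def)
  ultimately have Fm: "F \<in> borel_measurable M" by simp
  obtain r where r: "integral\<^sup>N M F = ennreal r" "r \<ge> 0" using I' by (cases "integral\<^sup>N M F") auto
  define l where "l = (1 / (r + 1)) powr (1 / p)"
  have l0: "l > 0" using r by (simp add: l_def)
  have l1: "l \<le> 1" unfolding l_def using r p by (simp add: powr_le1)
  have lp: "l powr p = 1 / (r + 1)" unfolding l_def using r p by (simp add: powr_powr)
  define b where "b = c / l"
  have bp: "b > 0" using c l0 by (simp add: b_def)
  have pw: "ennreal (\<Phi> (norm (f x) / b)) \<le> ennreal (l powr p) * F x" for x
  proof -
    have t: "norm (f x) / c \<ge> 0" using c by simp
    have "norm (f x) / b = l * (norm (f x) / c)" using l0 c by (simp add: b_def)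
    hence "\<Phi> (norm (f x) / b) \<le> l powr p * \<Phi> (norm (f x) / c)" using K_le1[OF K t l0 l1] by simp
    moreover have "\<Phi> (norm (f x) / c) \<ge> 0" using K t by (simp add: class_K_def)
    ultimately show ?thesis unfolding F_def by (simp add: ennreal_mult[symmetric])
  qed
  have "(\<integral>\<^sup>+x. ennreal (\<Phi> (norm (f x) / b)) \<partial>M) \<le> (\<integral>\<^sup>+x. ennreal (l powr p) * F x \<partial>M)"
    by (rule nn_integral_mono) (rule pw)
  also have "\<dots> = ennreal (l powr p) * ennreal r" using nn_integral_cmult[OF Fm] r by simp
  also have "\<dots> = ennreal (r / (r + 1))" using lp r by (simp add: ennreal_mult[symmetric])
  also have "\<dots> \<le> 1" using r by simp
  finally show ?thesis using bp by blast
qed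



lemma cont_powr0: "e > 0 \<Longrightarrow> continuous_on {0..} (\<lambda>x::real. x powr e)"
  by (rule continuous_on_powr') (auto intro: continuous_intros)

lemma main_gen:
  fixes M :: "'a measure" and f :: "'a \<Rightarrow> 'k::real_normed_vector"
  assumes KF: "class_K pF qF \<Phi>" and KP: "class_K pP qP \<Psi>"
    and pr: "0 < pF" "pF \<le> qF" "0 < pP" "pP \<le> qP"
    and posP: "\<forall>t>0. 0 < \<Psi> t"
    and ab: "\<alpha> = pF / qP" "\<beta> = qF / pP"
    and fin: "f \<in> orlicz_space M \<Phi>"
  shows "min (gauge_norm M \<Phi> f powr \<alpha>) (gauge_norm M \<Phi> f powr \<beta>) \<le> gauge_norm M \<Psi> (mazur_map \<Phi> \<Psi> f) \<and>
         gauge_norm M \<Psi> (mazur_map \<Phi> \<Psi> f) \<le> max (gauge_norm M \<Phi> f powr \<alpha>) (gauge_norm M \<Phi> f powr \<beta>)"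
proof -
  have alb: "\<alpha> > 0" "\<beta> > 0" using pr ab by auto
  define MF where "MF c = (\<integral>\<^sup>+x. ennreal (\<Phi> (norm (f x) / c)) \<partial>M)" for c
  define S where "S = {b. b > 0 \<and> MF b \<le> 1}"
  have mF: "orlicz_modular M \<Phi> (\<lambda>x. inverse b *\<^sub>R f x) = MF b" if "b > 0" for b
    unfolding MF_def by (rule modular_scale[OF that])
  have aS: "gauge_norm M \<Phi> f = Inf S"
    unfolding gauge_norm_def S_def by (intro arg_cong[where f=Inf] Collect_cong) (metis mF)
  define a where "a = Inf S"
  have Pnn: "\<Phi> t \<ge> 0" if "t \<ge> 0" for t using KF that by (simp add: class_K_def)
  define G where "G x = Ninv \<Psi> (\<Phi> (norm (f x)))" for x
  have Gp: "G x \<ge> 0 \<and> \<Psi> (G x) = \<Phi> (norm (f x))" for x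
    unfolding G_def by (rule Ninv_props[OF KP pr(3) posP Pnn]) simp
  have N0: "Ninv \<Psi> 0 = 0"
  proof -
    have "Ninv \<Psi> 0 \<ge> 0 \<and> \<Psi> (Ninv \<Psi> 0) = 0" by (rule Ninv_props[OF KP pr(3) posP]) simp
    hence h: "Ninv \<Psi> 0 \<ge> 0" "\<Psi> (Ninv \<Psi> 0) = 0" by auto
    show ?thesis
    proof (rule ccontr)
      assume "Ninv \<Psi> 0 \<noteq> 0" hence "Ninv \<Psi> 0 > 0" using h by simp
      hence "\<Psi> (Ninv \<Psi> 0) > 0" using posP by blast
      thus False using h by simp
    qed
  qed
  have P0: "\<Phi> 0 = 0" using KF by (simp add: class_K_def)
  have ng: "norm (mazur_map \<Phi> \<Psi> f x) = G x" for x
  proof (cases "f x = 0")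
    case True then show ?thesis by (simp add: mazur_map_def G_def P0 N0)
  next
    case False then show ?thesis using Gp[of x] by (simp add: mazur_map_def G_def norm_sgn)
  qed
  define MG where "MG b = (\<integral>\<^sup>+x. ennreal (\<Psi> (G x / b)) \<partial>M)" for b
  define T where "T = {b. b > 0 \<and> MG b \<le> 1}"
  have mG: "orlicz_modular M \<Psi> (\<lambda>x. inverse b *\<^sub>R mazur_map \<Phi> \<Psi> f x) = MG b" if "b > 0" for b
    unfolding MG_def modular_scale[OF that] ng ..
  have bT: "gauge_norm M \<Psi> (mazur_map \<Phi> \<Psi> f) = Inf T"
    unfolding gauge_norm_def T_def by (intro arg_cong[where f=Inf] Collect_cong) (metis mG)
  have Sne: "S \<noteq> {}" using S_nonempty[OF KF pr(1) fin] by (auto simp: S_def MF_def)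
  have Sbdd: "bdd_below S" unfolding S_def by (rule bdd_belowI[of _ 0]) auto
  have Tbdd: "bdd_below T" unfolding T_def by (rule bdd_belowI[of _ 0]) auto
  have a0: "a \<ge> 0" unfolding a_def using Sne by (intro cInf_greatest) (auto simp: S_def)
  have monoP: "mono_on {0..} \<Phi>" using KF by (simp add: class_K_def)
  have Sup: "c \<in> S" if ca: "c > a" for c
  proof -
    obtain s where s: "s \<in> S" "s < c" using cInf_lessD[OF Sne, of c] ca by (auto simp: a_def)
    have sp: "s > 0" using s by (simp add: S_def)
    have "MF c \<le> MF s" unfolding MF_def
    proof (rule nn_integral_mono)
      fix x
      have "norm (f x) / c \<le> norm (f x) / s" using sp s by (simp add: frac_le)
      hence "\<Phi> (norm (f x) / c) \<le> \<Phi> (norm (f x) / s)" using mono_onD[OF monoP] sp s by simp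
      then show "ennreal (\<Phi> (norm (f x) / c)) \<le> ennreal (\<Phi> (norm (f x) / s))" by (rule ennreal_leI)
    qed
    then show ?thesis using s sp by (auto simp: S_def)
  qed
  define h where "h x = max (x powr \<alpha>) (x powr \<beta>)" for x :: real
  define m where "m x = min (x powr \<alpha>) (x powr \<beta>)" for x :: real
  have upT: "h c \<in> T" if "c > a" for c
  proof -
    have cp: "c > 0" using that a0 by simp
    have "c powr \<alpha> > 0" using cp by simp
    hence hp: "h c > 0" unfolding h_def by linarith
    have "MG (h c) \<le> MF c" unfolding MG_def MF_def
    proof (rule nn_integral_mono)
      fix x
      have "\<Psi> (G x / h c) \<le> \<Phi> (norm (f x) / c)"
        by (rule pt_up[OF KF KP pr ab _ _ _ cp]) (use Gp[of x] in \<open>auto simp: h_def\<close>)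
      then show "ennreal (\<Psi> (G x / h c)) \<le> ennreal (\<Phi> (norm (f x) / c))" by (rule ennreal_leI)
    qed
    also have "MF c \<le> 1" using Sup[OF that] by (simp add: S_def)
    finally show ?thesis using hp by (simp add: T_def)
  qed
  have Tne: "T \<noteq> {}" using upT[of "a + 1"] by auto
  have ub: "Inf T \<le> h a"
  proof (rule tendsto_lowerbound)
    have "continuous_on {0..} h" unfolding h_def
      using cont_powr0[OF alb(1)] cont_powr0[OF alb(2)] by (intro continuous_on_max)
    hence "(h \<longlongrightarrow> h a) (at a within {0..})" using a0 by (simp add: continuous_on_def)
    then show "(h \<longlongrightarrow> h a) (at_right a)" by (rule tendsto_within_subset) (use a0 in auto)
    show "\<forall>\<^sub>F x in at_right a. Inf T \<le> h x"
      using eventually_at_right_real[of a "a + 1", OF less_add_one]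
      by eventually_elim (auto intro: cInf_lower[OF upT Tbdd])
    show "\<not> trivial_limit (at_right a)" by simp
  qed
  have lb: "m a \<le> b" if bT: "b \<in> T" for b
  proof (rule ccontr)
    assume "\<not> m a \<le> b"
    hence bm: "b < m a" by simp
    have bp: "b > 0" using bT by (simp add: T_def)
    have ap: "a > 0"
    proof (rule ccontr)
      assume "\<not> a > 0" hence "a = 0" using a0 by simp
      then show False using bm bp alb by (simp add: m_def)
    qed
    have sub: "{0<..} \<subseteq> {0::real..}" by auto
    have "continuous_on {0<..} m" unfolding m_def
      using continuous_on_subset[OF cont_powr0[OF alb(1)] sub]
        continuous_on_subset[OF cont_powr0[OF alb(2)] sub] by (intro continuous_on_min)
    hence "isCont m a" using ap continuous_on_eq_continuous_at[of "{0<..}" m] by simp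
    hence "(m \<longlongrightarrow> m a) (at a)" by (simp add: isCont_def)
    hence "(m \<longlongrightarrow> m a) (at_left a)" by (rule tendsto_within_subset) simp
    hence "\<forall>\<^sub>F x in at_left a. b < m x" using bm by (rule order_tendstoD(1))
    moreover have "\<forall>\<^sub>F x in at_left a. x \<in> {0<..<a}" using ap by (rule eventually_at_left_real)
    ultimately have "\<forall>\<^sub>F x in at_left a. b < m x \<and> x \<in> {0<..<a}" by (rule eventually_conj)
    then have "\<exists>c. b < m c \<and> c \<in> {0<..<a}"
      using eventually_happens[of _ "at_left a"] trivial_limit_at_left_real by blast
    then obtain c where c: "b < m c" "0 < c" "c < a" by auto
    have "c \<notin> S"
    proof
      assume "c \<in> S" then have "a \<le> c" unfolding a_def by (rule cInf_lower[OF _ Sbdd])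
      then show False using c by simp
    qed
    hence "\<not> MF c \<le> 1" using c by (simp add: S_def)
    moreover have "MF c \<le> MG b" unfolding MG_def MF_def
    proof (rule nn_integral_mono)
      fix x
      have "\<Phi> (norm (f x) / c) \<le> \<Psi> (G x / b)"
        by (rule pt_lo[OF KF KP pr ab _ _ _ c(2) bp]) (use Gp[of x] c in \<open>auto simp: m_def\<close>)
      then show "ennreal (\<Phi> (norm (f x) / c)) \<le> ennreal (\<Psi> (G x / b))" by (rule ennreal_leI)
    qed
    moreover have "MG b \<le> 1" using bT by (simp add: T_def)
    ultimately show False by simp
  qed
  have "m a \<le> Inf T" using Tne lb by (intro cInf_greatest) auto
  then show ?thesis using ub aS bT by (simp add: a_def h_def m_def)
qed


theorem mainTheorem8:
  fixes \<Phi> \<Psi> :: "real \<Rightarrow> real" and p\<Phi> q\<Phi> p\<Psi> q\<Psi> :: real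
  assumes "N_function \<Phi>" and "N_function \<Psi>"
    and "0 < p\<Phi>" and "p\<Phi> \<le> q\<Phi>" and "0 < p\<Psi>" and "p\<Psi> \<le> q\<Psi>"
    and "class_K p\<Phi> q\<Phi> \<Phi>" and "class_K p\<Psi> q\<Psi> \<Psi>"
  defines "\<alpha> \<equiv> p\<Phi> / q\<Psi>" and "\<beta> \<equiv> q\<Phi> / p\<Psi>"
  shows
   "(delta2_infty \<Phi> \<and> delta2_infty \<Psi> \<longrightarrow>
      (\<forall>f :: real \<Rightarrow> real. f \<in> orlicz_space (lebesgue_on {0..1}) \<Phi> \<longrightarrow>
         min (gauge_norm (lebesgue_on {0..1}) \<Phi> f powr \<alpha>) (gauge_norm (lebesgue_on {0..1}) \<Phi> f powr \<beta>)
           \<le> gauge_norm (lebesgue_on {0..1}) \<Psi> (mazur_map \<Phi> \<Psi> f) \<and>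
         gauge_norm (lebesgue_on {0..1}) \<Psi> (mazur_map \<Phi> \<Psi> f)
           \<le> max (gauge_norm (lebesgue_on {0..1}) \<Phi> f powr \<alpha>) (gauge_norm (lebesgue_on {0..1}) \<Phi> f powr \<beta>)) \<and>
      (\<forall>f :: real \<Rightarrow> complex. f \<in> orlicz_space (lebesgue_on {0..1}) \<Phi> \<longrightarrow>
         min (gauge_norm (lebesgue_on {0..1}) \<Phi> f powr \<alpha>) (gauge_norm (lebesgue_on {0..1}) \<Phi> f powr \<beta>)
           \<le> gauge_norm (lebesgue_on {0..1}) \<Psi> (mazur_map \<Phi> \<Psi> f) \<and>
         gauge_norm (lebesgue_on {0..1}) \<Psi> (mazur_map \<Phi> \<Psi> f)
           \<le> max (gauge_norm (lebesgue_on {0..1}) \<Phi> f powr \<alpha>) (gauge_norm (lebesgue_on {0..1}) \<Phi> f powr \<beta>)))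
    \<and>
    (delta2_zero \<Phi> \<and> delta2_zero \<Psi> \<longrightarrow>
      (\<forall>f :: nat \<Rightarrow> real. f \<in> orlicz_space (count_space UNIV) \<Phi> \<longrightarrow>
         min (gauge_norm (count_space UNIV) \<Phi> f powr \<alpha>) (gauge_norm (count_space UNIV) \<Phi> f powr \<beta>)
           \<le> gauge_norm (count_space UNIV) \<Psi> (mazur_map \<Phi> \<Psi> f) \<and>
         gauge_norm (count_space UNIV) \<Psi> (mazur_map \<Phi> \<Psi> f)
           \<le> max (gauge_norm (count_space UNIV) \<Phi> f powr \<alpha>) (gauge_norm (count_space UNIV) \<Phi> f powr \<beta>)) \<and>
      (\<forall>f :: nat \<Rightarrow> complex. f \<in> orlicz_space (count_space UNIV) \<Phi> \<longrightarrow>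
         min (gauge_norm (count_space UNIV) \<Phi> f powr \<alpha>) (gauge_norm (count_space UNIV) \<Phi> f powr \<beta>)
           \<le> gauge_norm (count_space UNIV) \<Psi> (mazur_map \<Phi> \<Psi> f) \<and>
         gauge_norm (count_space UNIV) \<Psi> (mazur_map \<Phi> \<Psi> f)
           \<le> max (gauge_norm (count_space UNIV) \<Phi> f powr \<alpha>) (gauge_norm (count_space UNIV) \<Phi> f powr \<beta>)))"
  proof -
  have pos: "\<forall>t>0. 0 < \<Psi> t" using assms(2) by (simp add: N_function_def)
  have ab: "\<alpha> = p\<Phi> / q\<Psi>" "\<beta> = q\<Phi> / p\<Psi>" by (simp_all add: \<alpha>_def \<beta>_def)
  note G = main_gen[OF assms(7) assms(8) assms(3) assms(4) assms(5) assms(6) pos ab]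
  show ?thesis
    apply (intro conjI impI allI)
    apply (drule G, erule conjE, assumption)+
    done
qed

end
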